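(* Let $u_0\in C^1_{\mathrm{ub}}(\mathbb{R})$ satisfy $u_0(-x)=-u_0(x)$ for all $x\in\mathbb{R}$. Let $u\in C([0,\infty),C_{\mathrm{ub}}(\mathbb{R}))$ be the unique global mild solution of the modular Burgers' equation $u_t=u_{xx}+|u|_x$ with $u(0,\cdot)=u_0$. Then $u(t,-x)=-u(t,x)$ for all $t\ge0$ and $x\in\mathbb{R}$.
   Context: $C_{\mathrm{ub}}(\mathbb{R})$ is the space of bounded uniformly continuous functions with the sup-norm; $C^1_{\mathrm{ub}}(\mathbb{R})$ the space of $C^1$ functions $g$ with $g,g'\in C_{\mathrm{ub}}(\mathbb{R})$. The mild solution is the unique $u\in C([0,\infty),C_{\mathrm{ub}}(\mathbb{R}))$ satisfying $$u(t,\cdot)=e^{\partial_x^2 t}u_0+\int_0^t\partial_x e^{\partial_x^2(t-s)}|u(s,\cdot)|\,ds,$$ where $(e^{\partial_x^2 t}g)(x)=\int_{\mathbb{R}}(4\pi t)^{-1/2}e^{-(x-y)^2/(4t)}g(y)\,dy$. *)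

theory Defs
  imports "HOL-Analysis.Analysis"
begin

definition Cub :: "(real \<Rightarrow> real) set" where
  "Cub = {g. bounded (range g) \<and> uniformly_continuous_on UNIV g}"

definition C1ub :: "(real \<Rightarrow> real) set" where
  "C1ub = {g. g differentiable_on UNIV \<and> g \<in> Cub \<and> deriv g \<in> Cub}"

definition heat :: "real \<Rightarrow> (real \<Rightarrow> real) \<Rightarrow> real \<Rightarrow> real" where
  "heat t g x = (if t \<le> 0 then g x else
     integral UNIV (\<lambda>y. (4 * pi * t) powr (-1/2) * exp (- ((x - y)^2) / (4 * t)) * g y))"

text \<open>u is continuous from [0,\<infinity>) into C_ub(R) (sup-norm topology).\<close>
definition cont_Cub_path :: "(real \<Rightarrow> real \<Rightarrow> real) \<Rightarrow> bool" where
  "cont_Cub_path u \<longleftrightarrow> (\<forall>t\<ge>0. u t \<in> Cub) \<and>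
     (\<forall>t\<ge>0. \<forall>e>0. \<exists>d>0. \<forall>s\<ge>0. \<bar>s - t\<bar> < d \<longrightarrow> (\<forall>x. \<bar>u s x - u t x\<bar> \<le> e))"

text \<open>Mild solution of u_t = u_xx + |u|_x with initial datum u0 (Duhamel formula,
  evaluated pointwise in x).\<close>
definition mild_solution :: "(real \<Rightarrow> real) \<Rightarrow> (real \<Rightarrow> real \<Rightarrow> real) \<Rightarrow> bool" where
  "mild_solution u0 u \<longleftrightarrow> cont_Cub_path u \<and>
     (\<forall>t\<ge>0. \<forall>x. u t x = heat t u0 x +
        integral {0..t} (\<lambda>s. deriv (\<lambda>z. heat (t - s) (\<lambda>y. \<bar>u s y\<bar>) z) x))"

end

theory Submission
  imports Defs "HOL-Probability.Distributions"
begin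

lemma nd_eq:
  assumes "\<tau> > 0"
  shows "(4 * pi * \<tau>) powr (-1/2) * exp (- ((x - y)^2) / (4 * \<tau>)) = normal_density x (sqrt (2*\<tau>)) y"
proof -
  have m: "(-1/2::real) = - (1/2)" by simp
  have "(4 * pi * \<tau>) powr (-1/2) = 1 / sqrt (4 * pi * \<tau>)"
    unfolding m using assms by (simp add: powr_minus_divide powr_half_sqrt)
  also have "\<dots> = 1 / sqrt (2 * pi * (sqrt (2*\<tau>))\<^sup>2)"
    using assms by simp
  finally have 1: "(4 * pi * \<tau>) powr (-1/2) = 1 / sqrt (2 * pi * (sqrt (2*\<tau>))\<^sup>2)" .
  have 2: "- ((x - y)^2) / (4 * \<tau>) = -(y - x)\<^sup>2/ (2 * (sqrt (2*\<tau>))\<^sup>2)"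
    using assms by (simp add: power2_commute)
  show ?thesis unfolding normal_density_def 1 2 ..
qed

lemma integrable_bdd_mult:
  fixes w g :: "real \<Rightarrow> real"
  assumes "integrable lborel w" "g \<in> borel_measurable borel" "\<And>y. \<bar>g y\<bar> \<le> B"
  shows "integrable lborel (\<lambda>y. w y * g y)"
proof -
  have B: "0 \<le> B" using assms(3)[of 0] by simp
  have i: "integrable lborel (\<lambda>y. B * w y)" using assms(1) by simp
  have mw: "w \<in> borel_measurable borel" using borel_measurable_integrable[OF assms(1)] by simp
  have m: "(\<lambda>y. w y * g y) \<in> borel_measurable lborel"
    unfolding measurable_lborel2 by (rule borel_measurable_times[OF mw assms(2)])
  have "\<And>x. \<bar>w x\<bar> * \<bar>g x\<bar> \<le> B * \<bar>w x\<bar>" using assms(3) by (metis abs_ge_zero mult.commute mult_left_mono)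
  then show ?thesis
    by (intro Bochner_Integration.integrable_bound[OF i m] AE_I2) (use B in \<open>auto simp: abs_mult\<close>)
qed

definition Hl :: "real \<Rightarrow> (real \<Rightarrow> real) \<Rightarrow> real \<Rightarrow> real" where
  "Hl \<sigma> g x = (\<integral>y. normal_density x \<sigma> y * g y \<partial>lborel)"

definition Pint :: "(real \<Rightarrow> real) \<Rightarrow> real \<Rightarrow> real \<Rightarrow> real" where
  "Pint g \<sigma> x = (\<integral>z. std_normal_density z * z * g (x + \<sigma> * z) \<partial>lborel)"

lemma heat_Hl:
  assumes "\<tau> > 0" "g \<in> borel_measurable borel" "\<And>y. \<bar>g y\<bar> \<le> B"
  shows "heat \<tau> g x = Hl (sqrt (2*\<tau>)) g x"
proof -
  have n: "\<not> \<tau> \<le> 0" using assms(1) by simp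
  have "heat \<tau> g x = integral UNIV (\<lambda>y. normal_density x (sqrt (2*\<tau>)) y * g y)"
    unfolding heat_def if_not_P[OF n] nd_eq[OF assms(1)] ..
  also have "\<dots> = Hl (sqrt (2*\<tau>)) g x"
    unfolding Hl_def
    by (rule integral_lborel, rule integrable_bdd_mult[OF _ assms(2,3)]) (use assms(1) in auto)
  finally show ?thesis .
qed

lemma dct_seq:
  fixes s :: "nat \<Rightarrow> real \<Rightarrow> real"
  assumes "\<And>n. s n \<in> borel_measurable lborel" "f \<in> borel_measurable lborel" "integrable lborel w"
    "\<And>y. (\<lambda>n. s n y) \<longlonglongrightarrow> f y" "eventually (\<lambda>n. \<forall>y. \<bar>s n y\<bar> \<le> w y) sequentially"
  shows "(\<lambda>n. \<integral>y. s n y \<partial>lborel) \<longlonglongrightarrow> (\<integral>y. f y \<partial>lborel)"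
proof -
  obtain N where N: "\<And>n. n \<ge> N \<Longrightarrow> \<forall>y. \<bar>s n y\<bar> \<le> w y"
    using assms(5) by (auto simp: eventually_sequentially)
  have "(\<lambda>n. \<integral>y. s (n+N) y \<partial>lborel) \<longlonglongrightarrow> (\<integral>y. f y \<partial>lborel)"
  proof (rule integral_dominated_convergence[where w=w])
    show "AE x in lborel. (\<lambda>i. s (i + N) x) \<longlonglongrightarrow> f x"
      by (intro AE_I2 LIMSEQ_ignore_initial_segment assms(4))
    show "AE x in lborel. norm (s (i + N) x) \<le> w x" for i
      using N[of "i+N"] by auto
  qed (use assms in auto)
  then show ?thesis by (rule LIMSEQ_offset)
qed

lemma nd_deriv:
  assumes "\<sigma> > 0"
  shows "((\<lambda>m. normal_density m \<sigma> y) has_real_derivative normal_density m \<sigma> y * ((y - m) / \<sigma>\<^sup>2)) (at m)"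
proof -
  have "((\<lambda>m. exp (-(y - m)\<^sup>2/ (2 * \<sigma>\<^sup>2))) has_real_derivative exp (-(y - m)\<^sup>2/ (2 * \<sigma>\<^sup>2)) * ((y - m) / \<sigma>\<^sup>2)) (at m)"
    using assms by (auto intro!: derivative_eq_intros simp: field_simps power2_eq_square)
  from DERIV_cmult[OF this, of "1 / sqrt (2 * pi * \<sigma>\<^sup>2)"] show ?thesis
    unfolding normal_density_def by (simp add: ac_simps)
qed

lemma nd_dom:
  assumes "\<sigma> > 0" "\<bar>m - x\<bar> \<le> 1"
  shows "\<bar>normal_density m \<sigma> y * ((y - m) / \<sigma>\<^sup>2)\<bar>
     \<le> (sqrt 2 * exp (1/(2*\<sigma>\<^sup>2)) / \<sigma>\<^sup>2) * (normal_density x (sqrt 2 * \<sigma>) y * (\<bar>y - x\<bar> + 1))"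
proof -
  define a where "a = y - m"
  define b where "b = m - x"
  have yx: "y - x = a + b" by (simp add: a_def b_def)
  have bb: "b * b \<le> 1"
    using mult_le_one[of "\<bar>b\<bar>" "\<bar>b\<bar>"] assms(2) by (simp add: b_def abs_mult[symmetric])
  have e1: "(a+b)*(a+b) = a*a + 2*(a*b) + b*b" by (simp add: algebra_simps)
  have e2: "(a-b)*(a-b) = a*a - 2*(a*b) + b*b" by (simp add: algebra_simps)
  have "0 \<le> (a-b)*(a-b)" by simp
  moreover have "(y-x)\<^sup>2 = (a+b)*(a+b)" by (simp add: yx power2_eq_square)
  moreover have "(y-m)\<^sup>2 = a*a" by (simp add: a_def power2_eq_square)
  ultimately have key: "(y-x)\<^sup>2 \<le> 2*(y-m)\<^sup>2 + 2"
    using e1 e2 bb by linarith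
  define s where "s = \<sigma>\<^sup>2"
  have s0: "s > 0" using assms(1) by (simp add: s_def)
  have sq: "(sqrt 2 * \<sigma>)\<^sup>2 = 2 * s" by (simp add: power_mult_distrib s_def)
  define A where "A = (y - m)\<^sup>2"
  define C where "C = (y - x)\<^sup>2"
  have d: "1/(2* s) + (-C)/(2*(2* s)) - ((-A)/(2* s)) = (2 - C + 2*A)/(4* s)"
    using s0 by (simp add: field_simps)
  have "0 \<le> (2 - C + 2*A)/(4* s)"
    using key s0 unfolding A_def C_def by (intro divide_nonneg_pos) auto
  then have "(-A)/ (2 * s) \<le> 1/(2* s) + (-C)/ (2 * (sqrt 2 * \<sigma>)\<^sup>2)"
    using d unfolding sq by linarith
  then have "-(y - m)\<^sup>2/ (2 * s) \<le> 1/(2* s) + -(y - x)\<^sup>2/ (2 * (sqrt 2 * \<sigma>)\<^sup>2)"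
    unfolding A_def C_def by simp
  then have e: "exp (-(y - m)\<^sup>2/ (2 * s)) \<le> exp (1/(2* s)) * exp (-(y - x)\<^sup>2/ (2 * (sqrt 2 * \<sigma>)\<^sup>2))"
    by (simp add: exp_add[symmetric])
  define Q where "Q = sqrt (2 * pi * s)"
  have Q0: "Q > 0" using s0 by (simp add: Q_def)
  have n1: "normal_density m \<sigma> y = exp (-(y - m)\<^sup>2/ (2 * s)) / Q"
    by (simp add: normal_density_def Q_def s_def)
  have n2: "normal_density x (sqrt 2 * \<sigma>) y = exp (-(y - x)\<^sup>2/ (2 * (sqrt 2 * \<sigma>)\<^sup>2)) / (sqrt 2 * Q)"
    unfolding normal_density_def Q_def sq
    by (simp add: real_sqrt_mult)
  have nd: "normal_density m \<sigma> y \<le> sqrt 2 * exp (1/(2* s)) * normal_density x (sqrt 2 * \<sigma>) y"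
  proof -
    have "sqrt 2 * exp (1/(2* s)) * normal_density x (sqrt 2 * \<sigma>) y
        = exp (1/(2* s)) * exp (-(y - x)\<^sup>2/ (2 * (sqrt 2 * \<sigma>)\<^sup>2)) / Q"
      unfolding n2 by simp
    then show ?thesis unfolding n1 using e Q0 by (simp add: divide_right_mono)
  qed
  have ym: "\<bar>y - m\<bar> \<le> \<bar>y - x\<bar> + 1" using assms(2) by linarith
  have "\<bar>normal_density m \<sigma> y * ((y - m) / \<sigma>\<^sup>2)\<bar> = normal_density m \<sigma> y * \<bar>y - m\<bar> / s"
    by (simp add: abs_mult s_def)
  also have "\<dots> \<le> (sqrt 2 * exp (1/(2* s)) * normal_density x (sqrt 2 * \<sigma>) y) * (\<bar>y - x\<bar> + 1) / s"
    using nd ym s0 by (intro divide_right_mono mult_mono) auto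
  finally show ?thesis by (simp add: s_def)
qed

lemma Hl_deriv:
  assumes \<sigma>: "\<sigma> > 0" and gm[measurable]: "g \<in> borel_measurable borel" and gb: "\<And>y. \<bar>g y\<bar> \<le> B"
  shows "(Hl \<sigma> g has_real_derivative (\<integral>y. normal_density x \<sigma> y * ((y - x) / \<sigma>\<^sup>2) * g y \<partial>lborel)) (at x)"
proof -
  define c where "c = sqrt 2 * exp (1/(2*\<sigma>\<^sup>2)) / \<sigma>\<^sup>2"
  define Bd where "Bd y = c * (normal_density x (sqrt 2 * \<sigma>) y * (\<bar>y - x\<bar> + 1))" for y
  define W where "W y = Bd y * B" for y
  have B0: "0 \<le> B" using gb[of 0] by simp
  have Bd0: "0 \<le> Bd y" for y unfolding Bd_def c_def by simp
  have intW: "integrable lborel W"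
  proof -
    have "integrable lborel (\<lambda>y. normal_density x (sqrt 2 * \<sigma>) y * \<bar>y - x\<bar>^1 + normal_density x (sqrt 2 * \<sigma>) y)"
      using \<sigma> by (intro Bochner_Integration.integrable_add integrable_normal_moment_abs integrable_normal_density) auto
    then have "integrable lborel (\<lambda>y. (c * B) * (normal_density x (sqrt 2 * \<sigma>) y * \<bar>y - x\<bar>^1 + normal_density x (sqrt 2 * \<sigma>) y))"
      by simp
    moreover have "W = (\<lambda>y. (c * B) * (normal_density x (sqrt 2 * \<sigma>) y * \<bar>y - x\<bar>^1 + normal_density x (sqrt 2 * \<sigma>) y))"
      by (auto simp: W_def Bd_def fun_eq_iff algebra_simps)
    ultimately show ?thesis by simp
  qed
  have int_ndg: "integrable lborel (\<lambda>y. normal_density m \<sigma> y * g y)" for m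
    by (rule integrable_bdd_mult[OF _ gm gb]) (use \<sigma> in auto)
  have quot: "(Hl \<sigma> g (x + h) - Hl \<sigma> g x) / h
      = (\<integral>y. (normal_density (x + h) \<sigma> y - normal_density x \<sigma> y) / h * g y \<partial>lborel)" for h
  proof -
    have "(\<integral>y. (normal_density (x + h) \<sigma> y - normal_density x \<sigma> y) / h * g y \<partial>lborel)
        = (\<integral>y. (normal_density (x + h) \<sigma> y * g y - normal_density x \<sigma> y * g y) / h \<partial>lborel)"
      by (rule Bochner_Integration.integral_cong) (auto simp: left_diff_distrib times_divide_eq_left)
    also have "\<dots> = (\<integral>y. (normal_density (x + h) \<sigma> y * g y - normal_density x \<sigma> y * g y) \<partial>lborel) / h"
      by (rule integral_divide_zero)
    also have "\<dots> = (Hl \<sigma> g (x + h) - Hl \<sigma> g x) / h"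
      unfolding Hl_def by (subst Bochner_Integration.integral_diff[OF int_ndg int_ndg]) rule
    finally show ?thesis by (rule sym)
  qed
  have bd: "\<bar>(normal_density (x + h) \<sigma> y - normal_density x \<sigma> y) / h\<bar> \<le> Bd y"
    if h: "h \<noteq> 0" "\<bar>h\<bar> \<le> 1" for h y
  proof -
    have "norm (normal_density (x + h) \<sigma> y - normal_density x \<sigma> y) \<le> Bd y * norm (x + h - x)"
    proof (rule field_differentiable_bound[where S="{x - 1 .. x + 1}" and f'="\<lambda>m. normal_density m \<sigma> y * ((y - m) / \<sigma>\<^sup>2)"])
      show "((\<lambda>m. normal_density m \<sigma> y) has_field_derivative normal_density z \<sigma> y * ((y - z) / \<sigma>\<^sup>2)) (at z within {x - 1..x + 1})" for z
        using nd_deriv[OF \<sigma>] by (rule has_field_derivative_at_within)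
      show "norm (normal_density z \<sigma> y * ((y - z) / \<sigma>\<^sup>2)) \<le> Bd y" if "z \<in> {x - 1..x + 1}" for z
        using nd_dom[OF \<sigma>, of z x y] that unfolding Bd_def c_def by auto
    qed (use h in auto)
    then show ?thesis using h by (simp add: divide_simps abs_mult)
  qed
  show ?thesis
    unfolding DERIV_def tendsto_at_iff_sequentially
  proof (intro allI impI)
    fix X :: "nat \<Rightarrow> real"
    assume X0: "\<forall>i. X i \<in> UNIV - {0}" and XL: "X \<longlonglongrightarrow> 0"
    have "(\<lambda>n. \<integral>y. (normal_density (x + X n) \<sigma> y - normal_density x \<sigma> y) / X n * g y \<partial>lborel)
        \<longlonglongrightarrow> (\<integral>y. normal_density x \<sigma> y * ((y - x) / \<sigma>\<^sup>2) * g y \<partial>lborel)"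
    proof (rule dct_seq[where w=W])
      show "(\<lambda>y. (normal_density (x + X n) \<sigma> y - normal_density x \<sigma> y) / X n * g y) \<in> borel_measurable lborel" for n
        by measurable
      show "(\<lambda>y. normal_density x \<sigma> y * ((y - x) / \<sigma>\<^sup>2) * g y) \<in> borel_measurable lborel"
        by measurable
      show "integrable lborel W" by (rule intW)
      show "(\<lambda>n. (normal_density (x + X n) \<sigma> y - normal_density x \<sigma> y) / X n * g y)
          \<longlonglongrightarrow> normal_density x \<sigma> y * ((y - x) / \<sigma>\<^sup>2) * g y" for y
      proof -
        have "((\<lambda>h. (normal_density (x + h) \<sigma> y - normal_density x \<sigma> y) / h) \<circ> X)
            \<longlonglongrightarrow> normal_density x \<sigma> y * ((y - x) / \<sigma>\<^sup>2)"
          using nd_deriv[OF \<sigma>, of y x] X0 XL unfolding DERIV_def tendsto_at_iff_sequentially by blast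
        then show ?thesis unfolding o_def by (rule tendsto_mult_right)
      qed
      have "\<forall>\<^sub>F n in sequentially. dist (X n) 0 < 1" using XL by (rule tendstoD) simp
      then show "\<forall>\<^sub>F n in sequentially. \<forall>y. \<bar>(normal_density (x + X n) \<sigma> y - normal_density x \<sigma> y) / X n * g y\<bar> \<le> W y"
      proof eventually_elim
        case (elim n)
        show ?case
        proof
          fix y
          have "\<bar>(normal_density (x + X n) \<sigma> y - normal_density x \<sigma> y) / X n * g y\<bar>
              = \<bar>(normal_density (x + X n) \<sigma> y - normal_density x \<sigma> y) / X n\<bar> * \<bar>g y\<bar>" by (simp add: abs_mult)
          also have "\<dots> \<le> Bd y * B"
            using bd[of "X n" y] X0 elim gb[of y] Bd0[of y] by (intro mult_mono) auto
          finally show "\<bar>(normal_density (x + X n) \<sigma> y - normal_density x \<sigma> y) / X n * g y\<bar> \<le> W y"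
            by (simp add: W_def)
        qed
      qed
    qed
    then show "((\<lambda>h. (Hl \<sigma> g (x + h) - Hl \<sigma> g x) / h) \<circ> X) \<longlonglongrightarrow> (\<integral>y. normal_density x \<sigma> y * ((y - x) / \<sigma>\<^sup>2) * g y \<partial>lborel)"
      unfolding o_def quot .
  qed
qed

lemma nd_affine:
  assumes "\<sigma> > 0"
  shows "normal_density x \<sigma> (x + \<sigma> * z) = std_normal_density z / \<sigma>"
proof -
  have 1: "sqrt (2 * pi * \<sigma>\<^sup>2) = sqrt (2 * pi) * \<sigma>"
    using assms by (simp add: real_sqrt_mult)
  have 2: "(x + \<sigma> * z - x)\<^sup>2 / (2 * \<sigma>\<^sup>2) = z\<^sup>2 / 2"
    using assms by (simp add: power_mult_distrib)
  show ?thesis unfolding normal_density_def 1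
    using 2 by (simp add: field_simps)
qed

lemma D_Pint:
  assumes \<sigma>: "\<sigma> > 0"
  shows "(\<integral>y. normal_density x \<sigma> y * ((y - x) / \<sigma>\<^sup>2) * g y \<partial>lborel) = Pint g \<sigma> x / \<sigma>"
proof -
  have "(\<integral>y. normal_density x \<sigma> y * ((y - x) / \<sigma>\<^sup>2) * g y \<partial>lborel)
      = \<bar>\<sigma>\<bar> *\<^sub>R (\<integral>z. normal_density x \<sigma> (x + \<sigma> * z) * ((x + \<sigma> * z - x) / \<sigma>\<^sup>2) * g (x + \<sigma> * z) \<partial>lborel)"
    using \<sigma> by (intro lborel_integral_real_affine) simp
  also have "\<dots> = (\<integral>z. \<sigma> * (normal_density x \<sigma> (x + \<sigma> * z) * ((x + \<sigma> * z - x) / \<sigma>\<^sup>2) * g (x + \<sigma> * z)) \<partial>lborel)"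
    using \<sigma> by simp
  also have "\<dots> = (\<integral>z. (std_normal_density z * z * g (x + \<sigma> * z)) / \<sigma> \<partial>lborel)"
  proof (rule Bochner_Integration.integral_cong)
    fix z
    show "\<sigma> * (normal_density x \<sigma> (x + \<sigma> * z) * ((x + \<sigma> * z - x) / \<sigma>\<^sup>2) * g (x + \<sigma> * z))
        = std_normal_density z * z * g (x + \<sigma> * z) / \<sigma>"
      unfolding nd_affine[OF \<sigma>] using \<sigma> by (simp add: power2_eq_square field_simps)
  qed simp
  also have "\<dots> = Pint g \<sigma> x / \<sigma>"
    unfolding Pint_def by (rule integral_divide_zero)
  finally show ?thesis .
qed

lemma integrable_Pint:
  assumes gm[measurable]: "g \<in> borel_measurable borel" and gb: "\<And>y. \<bar>g y\<bar> \<le> B"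
  shows "integrable lborel (\<lambda>z. std_normal_density z * z * g (x + \<sigma> * z))"
proof (rule integrable_bdd_mult[where B=B])
  show "integrable lborel (\<lambda>z. std_normal_density z * z)"
    using integrable_std_normal_moment[of 1] by simp
  show "(\<lambda>z. g (x + \<sigma> * z)) \<in> borel_measurable borel" by measurable
qed (use gb in auto)

lemma Pint_diff_bound:
  assumes [measurable]: "g \<in> borel_measurable borel" "h \<in> borel_measurable borel"
    and gb: "\<And>y. \<bar>g y\<bar> \<le> B" and hb: "\<And>y. \<bar>h y\<bar> \<le> B" and e: "\<And>y. \<bar>g y - h y\<bar> \<le> \<epsilon>"
  shows "\<bar>Pint g \<sigma> x - Pint h \<sigma> x\<bar> \<le> (\<integral>z. std_normal_density z * \<bar>z\<bar> \<partial>lborel) * \<epsilon>"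
proof -
  have ig: "integrable lborel (\<lambda>z. std_normal_density z * z * g (x + \<sigma> * z))"
    by (rule integrable_Pint[OF assms(1) gb])
  have ih: "integrable lborel (\<lambda>z. std_normal_density z * z * h (x + \<sigma> * z))"
    by (rule integrable_Pint[OF assms(2) hb])
  have ia: "integrable lborel (\<lambda>z. std_normal_density z * \<bar>z\<bar>)"
    using integrable_std_normal_moment_abs[of 1] by simp
  have "Pint g \<sigma> x - Pint h \<sigma> x = (\<integral>z. std_normal_density z * z * g (x + \<sigma> * z) - std_normal_density z * z * h (x + \<sigma> * z) \<partial>lborel)"
    unfolding Pint_def by (rule Bochner_Integration.integral_diff[OF ig ih, symmetric])
  also have "\<bar>\<dots>\<bar> \<le> (\<integral>z. std_normal_density z * \<bar>z\<bar> * \<epsilon> \<partial>lborel)"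
  proof (rule integral_abs_bound_integral)
    show "integrable lborel (\<lambda>z. std_normal_density z * z * g (x + \<sigma> * z) - std_normal_density z * z * h (x + \<sigma> * z))"
      using ig ih by simp
    show "integrable lborel (\<lambda>z. std_normal_density z * \<bar>z\<bar> * \<epsilon>)" using ia by simp
    fix z
    have "\<bar>std_normal_density z * z * g (x + \<sigma> * z) - std_normal_density z * z * h (x + \<sigma> * z)\<bar>
        = std_normal_density z * \<bar>z\<bar> * \<bar>g (x + \<sigma> * z) - h (x + \<sigma> * z)\<bar>"
      by (simp add: abs_mult right_diff_distrib[symmetric])
    also have "\<dots> \<le> std_normal_density z * \<bar>z\<bar> * \<epsilon>"
      using e by (intro mult_left_mono) auto
    finally show "\<bar>std_normal_density z * z * g (x + \<sigma> * z) - std_normal_density z * z * h (x + \<sigma> * z)\<bar>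
        \<le> std_normal_density z * \<bar>z\<bar> * \<epsilon>" .
  qed
  also have "\<dots> = (\<integral>z. std_normal_density z * \<bar>z\<bar> \<partial>lborel) * \<epsilon>"
    by (rule integral_mult_left_zero)
  finally show ?thesis .
qed

lemma Cub_bdd: "g \<in> Cub \<Longrightarrow> \<exists>B. \<forall>y. \<bar>g y\<bar> \<le> B"
  unfolding Cub_def bounded_iff by auto

lemma Cub_cont: "g \<in> Cub \<Longrightarrow> continuous_on UNIV g"
  unfolding Cub_def by (auto intro: uniformly_continuous_imp_continuous)

lemma Cub_meas: "g \<in> Cub \<Longrightarrow> g \<in> borel_measurable borel"
  by (rule borel_measurable_continuous_onI[OF Cub_cont])

lemma Cub_abs_meas: "g \<in> Cub \<Longrightarrow> (\<lambda>y. \<bar>g y\<bar>) \<in> borel_measurable borel"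
  using Cub_meas by measurable

lemma deriv_heat:
  assumes "\<tau> > 0" "g \<in> borel_measurable borel" "\<And>y. \<bar>g y\<bar> \<le> B"
  shows "deriv (\<lambda>z. heat \<tau> g z) x = Pint g (sqrt (2*\<tau>)) x / sqrt (2*\<tau>)"
proof -
  have s: "sqrt (2*\<tau>) > 0" using assms(1) by simp
  have "(\<lambda>z. heat \<tau> g z) = Hl (sqrt (2*\<tau>)) g"
    using heat_Hl[OF assms] by auto
  then show ?thesis
    using Hl_deriv[OF s assms(2,3), of x] D_Pint[OF s, of x g]
    by (auto intro: DERIV_imp_deriv)
qed

lemma kint:
  assumes "a \<le> t"
  shows "((\<lambda>s. 1 / sqrt (t - s)) has_integral 2 * sqrt (t - a)) {a..t}"
proof -
  have "((\<lambda>s. 1 / sqrt (t - s)) has_integral ((-2 * sqrt (t - t)) - (-2 * sqrt (t - a)))) {a..t}"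
  proof (rule fundamental_theorem_of_calculus_interior[OF assms])
    show "continuous_on {a..t} (\<lambda>s. -2 * sqrt (t - s))"
      by (intro continuous_intros)
    fix s assume "s \<in> {a<..<t}"
    then have "t - s > 0" by simp
    then have "((\<lambda>s. -2 * sqrt (t - s)) has_real_derivative 1 / sqrt (t - s)) (at s)"
      by (auto intro!: derivative_eq_intros simp: field_simps)
    then show "((\<lambda>s. -2 * sqrt (t - s)) has_vector_derivative 1 / sqrt (t - s)) (at s)"
      by (simp add: has_real_derivative_iff_has_vector_derivative)
  qed
  then show ?thesis by simp
qed

lemma cont_path_unif:
  assumes "cont_Cub_path u" "s0 \<ge> 0" "\<And>n. S n \<ge> 0" "S \<longlonglongrightarrow> s0" "e > 0"
  shows "\<forall>\<^sub>F n in sequentially. \<forall>y. \<bar>u (S n) y - u s0 y\<bar> \<le> e"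
proof -
  obtain d where d: "d > 0" "\<And>s. s \<ge> 0 \<Longrightarrow> \<bar>s - s0\<bar> < d \<Longrightarrow> \<forall>y. \<bar>u s y - u s0 y\<bar> \<le> e"
    using assms(1,2,5) unfolding cont_Cub_path_def by blast
  have "\<forall>\<^sub>F n in sequentially. dist (S n) s0 < d" using assms(4) d(1) by (rule tendstoD)
  then show ?thesis
    by eventually_elim (use d assms(3) in \<open>auto simp: dist_real_def\<close>)
qed

lemma Psi_cont:
  assumes cu: "cont_Cub_path u"
  shows "continuous_on {0..t} (\<lambda>s. Pint (\<lambda>y. \<bar>u s y\<bar>) (sqrt (2*(t-s))) x)"
  unfolding continuous_on_sequentially
proof (intro allI ballI impI, elim conjE)
  fix S :: "nat \<Rightarrow> real" and s0
  assume s0: "s0 \<in> {0..t}" and Sin: "\<forall>n. S n \<in> {0..t}" and SL: "S \<longlonglongrightarrow> s0"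
  have cub: "u s \<in> Cub" if "s \<ge> 0" for s using cu that unfolding cont_Cub_path_def by auto
  obtain B0 where B0: "\<And>y. \<bar>u s0 y\<bar> \<le> B0" using Cub_bdd[OF cub[of s0]] s0 by auto
  have meas: "\<And>n. u (S n) \<in> borel_measurable borel" using Cub_meas cub Sin by auto
  have meas0: "u s0 \<in> borel_measurable borel" using Cub_meas cub s0 by auto
  have unif: "\<forall>\<^sub>F n in sequentially. \<forall>y. \<bar>u (S n) y - u s0 y\<bar> \<le> e" if "e > 0" for e
    using cont_path_unif[OF cu _ _ SL that] s0 Sin by auto
  have c0: "continuous_on UNIV (u s0)" using Cub_cont cub s0 by auto
  show "((\<lambda>s. Pint (\<lambda>y. \<bar>u s y\<bar>) (sqrt (2*(t-s))) x) \<circ> S) \<longlonglongrightarrow> Pint (\<lambda>y. \<bar>u s0 y\<bar>) (sqrt (2*(t-s0))) x"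
    unfolding o_def Pint_def
  proof (rule dct_seq[where w="\<lambda>z. std_normal_density z * \<bar>z\<bar> * (B0 + 1)"])
    show "(\<lambda>z. std_normal_density z * z * \<bar>u (S n) (x + sqrt (2 * (t - S n)) * z)\<bar>) \<in> borel_measurable lborel" for n
      using meas[of n] by measurable
    show "(\<lambda>z. std_normal_density z * z * \<bar>u s0 (x + sqrt (2 * (t - s0)) * z)\<bar>) \<in> borel_measurable lborel"
      using meas0 by measurable
    show "integrable lborel (\<lambda>z. std_normal_density z * \<bar>z\<bar> * (B0 + 1))"
      using integrable_std_normal_moment_abs[of 1] by simp
    show "(\<lambda>n. std_normal_density z * z * \<bar>u (S n) (x + sqrt (2 * (t - S n)) * z)\<bar>)
        \<longlonglongrightarrow> std_normal_density z * z * \<bar>u s0 (x + sqrt (2 * (t - s0)) * z)\<bar>" for z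
    proof -
      define p where "p n = x + sqrt (2 * (t - S n)) * z" for n
      define p0 where "p0 = x + sqrt (2 * (t - s0)) * z"
      have pL: "p \<longlonglongrightarrow> p0" unfolding p_def p0_def
        by (intro tendsto_intros SL)
      have 1: "(\<lambda>n. u s0 (p n)) \<longlonglongrightarrow> u s0 p0"
        using c0 pL by (metis continuous_on_def isCont_tendsto_compose UNIV_I continuous_on_eq_continuous_at open_UNIV)
      have 2: "(\<lambda>n. u (S n) (p n) - u s0 (p n)) \<longlonglongrightarrow> 0"
      proof (rule tendstoI)
        fix e :: real assume "e > 0"
        then have "e/2 > 0" by simp
        from unif[OF this] show "\<forall>\<^sub>F n in sequentially. dist (u (S n) (p n) - u s0 (p n)) 0 < e"
        proof eventually_elim
          case (elim n)
          then have "\<bar>u (S n) (p n) - u s0 (p n)\<bar> \<le> e/2" by blast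
          then show ?case using \<open>e > 0\<close> by (simp add: dist_real_def)
        qed
      qed
      have "(\<lambda>n. (u (S n) (p n) - u s0 (p n)) + u s0 (p n)) \<longlonglongrightarrow> 0 + u s0 p0"
        by (rule tendsto_add[OF 2 1])
      then have "(\<lambda>n. u (S n) (p n)) \<longlonglongrightarrow> u s0 p0" by simp
      then have "(\<lambda>n. \<bar>u (S n) (p n)\<bar>) \<longlonglongrightarrow> \<bar>u s0 p0\<bar>" by (rule tendsto_rabs)
      then show ?thesis unfolding p_def p0_def by (rule tendsto_mult_left)
    qed
    show "\<forall>\<^sub>F n in sequentially. \<forall>z. \<bar>std_normal_density z * z * \<bar>u (S n) (x + sqrt (2 * (t - S n)) * z)\<bar>\<bar>
        \<le> std_normal_density z * \<bar>z\<bar> * (B0 + 1)"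
      using unif[OF zero_less_one]
    proof eventually_elim
      case (elim n)
      show ?case
      proof
        fix z
        have "\<bar>u (S n) (x + sqrt (2 * (t - S n)) * z)\<bar> \<le> B0 + 1"
          using elim[rule_format, of "x + sqrt (2 * (t - S n)) * z"] B0[of "x + sqrt (2 * (t - S n)) * z"] by linarith
        then show "\<bar>std_normal_density z * z * \<bar>u (S n) (x + sqrt (2 * (t - S n)) * z)\<bar>\<bar>
            \<le> std_normal_density z * \<bar>z\<bar> * (B0 + 1)"
          by (simp add: abs_mult mult_left_mono)
      qed
    qed
  qed
qed

lemma F_formula:
  assumes cu: "cont_Cub_path u" and s: "0 \<le> s" "s < t"
  shows "deriv (\<lambda>z. heat (t - s) (\<lambda>y. \<bar>u s y\<bar>) z) x
    = (1 / sqrt 2) * (Pint (\<lambda>y. \<bar>u s y\<bar>) (sqrt (2*(t-s))) x * (1 / sqrt (t - s)))"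
proof -
  have cub: "u s \<in> Cub" using cu s unfolding cont_Cub_path_def by auto
  obtain B where B: "\<And>y. \<bar>u s y\<bar> \<le> B" using Cub_bdd[OF cub] by auto
  have "deriv (\<lambda>z. heat (t - s) (\<lambda>y. \<bar>u s y\<bar>) z) x
      = Pint (\<lambda>y. \<bar>u s y\<bar>) (sqrt (2*(t-s))) x / sqrt (2*(t-s))"
    by (rule deriv_heat[where B=B]) (use s Cub_abs_meas[OF cub] B in auto)
  moreover have sq: "sqrt (2*(t-s)) = sqrt 2 * sqrt (t-s)" by (rule real_sqrt_mult)
  moreover have "X / (b * c) = 1 / b * (X * (1 / c))" for X b c :: real by simp
  ultimately show ?thesis unfolding sq by metis
qed

lemma F_integrable:
  assumes cu: "cont_Cub_path u" and t: "t \<ge> 0"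
  shows "(\<lambda>s. deriv (\<lambda>z. heat (t - s) (\<lambda>y. \<bar>u s y\<bar>) z) x) integrable_on {0..t}"
proof -
  define Psi where "Psi s = Pint (\<lambda>y. \<bar>u s y\<bar>) (sqrt (2*(t-s))) x" for s
  have pc: "continuous_on {0..t} Psi" unfolding Psi_def by (rule Psi_cont[OF cu])
  have k: "(\<lambda>s. 1 / sqrt (t - s)) absolutely_integrable_on {0..t}"
    using kint[OF t] by (intro nonnegative_absolutely_integrable_1) auto
  have "(\<lambda>s. Psi s * (1 / sqrt (t - s))) absolutely_integrable_on {0..t}"
  proof (rule absolutely_integrable_bounded_measurable_product_real[OF _ _ _ k])
    show "Psi \<in> borel_measurable (lebesgue_on {0..t})"
      by (rule continuous_imp_measurable_on_sets_lebesgue[OF pc]) simp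
    show "bounded (Psi ` {0..t})"
      by (rule compact_imp_bounded, rule compact_continuous_image[OF pc]) simp
  qed simp
  then have i0: "(\<lambda>s. Psi s * (1 / sqrt (t - s))) integrable_on {0..t}"
    by (simp add: absolutely_integrable_on_def)
  have i: "(\<lambda>s. (1 / sqrt 2) * (Psi s * (1 / sqrt (t - s)))) integrable_on {0..t}"
    using integrable_cmul[OF i0, of "1 / sqrt 2"] by (simp only: real_scaleR_def)
  show ?thesis
    by (rule integrable_spike_finite[OF _ _ i, where S="{t}"])
      (use F_formula[OF cu] in \<open>auto simp: Psi_def\<close>)
qed

lemma cont_path_at:
  assumes "cont_Cub_path u" "a \<ge> 0" "e > 0"
  shows "\<exists>d>0. \<forall>s\<ge>0. \<bar>s - a\<bar> < d \<longrightarrow> (\<forall>y. \<bar>u s y - u a y\<bar> \<le> e)"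
  using assms unfolding cont_Cub_path_def by blast

lemma closure_step:
  assumes cu: "cont_Cub_path u" and cv: "cont_Cub_path v" and b: "b > 0"
    and eq: "\<And>s y. 0 \<le> s \<Longrightarrow> s < b \<Longrightarrow> u s y = v s y"
  shows "u b y = v b y"
proof -
  have "\<bar>u b y - v b y\<bar> \<le> 0 + e" if e: "e > 0" for e
  proof -
    obtain d1 where d1: "d1 > 0" "\<And>s. s \<ge> 0 \<Longrightarrow> \<bar>s - b\<bar> < d1 \<Longrightarrow> \<forall>y. \<bar>u s y - u b y\<bar> \<le> e/2"
      using cont_path_at[OF cu, of b "e/2"] b e by auto
    obtain d2 where d2: "d2 > 0" "\<And>s. s \<ge> 0 \<Longrightarrow> \<bar>s - b\<bar> < d2 \<Longrightarrow> \<forall>y. \<bar>v s y - v b y\<bar> \<le> e/2"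
      using cont_path_at[OF cv, of b "e/2"] b e by auto
    define s where "s = max 0 (b - min d1 d2 / 2)"
    have s0: "s \<ge> 0" "s < b" "\<bar>s - b\<bar> < d1" "\<bar>s - b\<bar> < d2"
      using b d1 d2 by (auto simp: s_def)
    have "\<bar>u s y - u b y\<bar> \<le> e/2" "\<bar>v s y - v b y\<bar> \<le> e/2"
      using d1(2)[OF s0(1,3)] d2(2)[OF s0(1,4)] by auto
    moreover have "u s y = v s y" using eq s0 by auto
    ultimately show ?thesis by linarith
  qed
  then have "\<bar>u b y - v b y\<bar> \<le> 0" by (rule field_le_epsilon)
  then show ?thesis by simp
qed

lemma small_delta:
  assumes "c \<ge> 0" "0 \<le> \<delta>" "\<delta> \<le> 1 / (8 * (c + 1)\<^sup>2)"
  shows "c * sqrt 2 * sqrt \<delta> \<le> 1/2"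
proof (rule power2_le_imp_le)
  have "(c * sqrt 2 * sqrt \<delta>)\<^sup>2 = 2 * c\<^sup>2 * \<delta>" using assms by (simp add: power_mult_distrib)
  also have "\<dots> \<le> 2 * c\<^sup>2 * (1 / (8 * (c + 1)\<^sup>2))"
    using assms by (intro mult_left_mono) auto
  also have "\<dots> = (c\<^sup>2 / (c + 1)\<^sup>2) / 4"
  proof -
    have cp: "(c + 1)\<^sup>2 > 0" using assms by simp
    then show ?thesis by (simp add: field_simps)
  qed
  also have "\<dots> \<le> 1 / 4"
  proof -
    have cp: "(c + 1)\<^sup>2 > 0" using assms by simp
    have "c\<^sup>2 \<le> (c + 1)\<^sup>2" using assms by (intro power_mono) auto
    then have "c\<^sup>2 / (c + 1)\<^sup>2 \<le> 1" using cp by simp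
    then show ?thesis by simp
  qed
  finally show "(c * sqrt 2 * sqrt \<delta>)\<^sup>2 \<le> (1/2)\<^sup>2" by (simp add: power2_eq_square)
qed simp

lemma zero_by_halving:
  fixes z B :: real
  assumes "\<And>n. z \<le> B / 2 ^ n" "0 \<le> z"
  shows "z = 0"
proof -
  have "(\<lambda>n. B / 2 ^ n) \<longlonglongrightarrow> 0" by (rule LIMSEQ_divide_realpow_zero) simp
  then have "z \<le> 0" by (rule LIMSEQ_le_const) (use assms in auto)
  then show ?thesis using assms by simp
qed

definition Fd :: "(real \<Rightarrow> real \<Rightarrow> real) \<Rightarrow> real \<Rightarrow> real \<Rightarrow> real \<Rightarrow> real" where
  "Fd u t x s = deriv (\<lambda>z. heat (t - s) (\<lambda>y. \<bar>u s y\<bar>) z) x"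

lemma mild_eq:
  assumes "mild_solution u0 u" "t \<ge> 0"
  shows "u t x = heat t u0 x + integral {0..t} (Fd u t x)"
  using assms unfolding mild_solution_def Fd_def by blast

lemma uniq_step:
  assumes mu: "mild_solution u0 u" and mv: "mild_solution u0 v" and a: "a \<ge> 0"
    and eqa: "\<And>s y. 0 \<le> s \<Longrightarrow> s \<le> a \<Longrightarrow> u s y = v s y"
  shows "\<exists>\<delta>>0. \<forall>s y. 0 \<le> s \<longrightarrow> s \<le> a + \<delta> \<longrightarrow> u s y = v s y"
proof -
  have cu: "cont_Cub_path u" using mu unfolding mild_solution_def by auto
  have cv: "cont_Cub_path v" using mv unfolding mild_solution_def by auto
  have cubu: "u s \<in> Cub" if "s \<ge> 0" for s using cu that unfolding cont_Cub_path_def by auto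
  have cubv: "v s \<in> Cub" if "s \<ge> 0" for s using cv that unfolding cont_Cub_path_def by auto
  obtain Bu where Bu: "\<And>y. \<bar>u a y\<bar> \<le> Bu" using Cub_bdd[OF cubu[OF a]] by auto
  obtain Bv where Bv: "\<And>y. \<bar>v a y\<bar> \<le> Bv" using Cub_bdd[OF cubv[OF a]] by auto
  obtain d1 where d1: "d1 > 0" "\<And>s. s \<ge> 0 \<Longrightarrow> \<bar>s - a\<bar> < d1 \<Longrightarrow> \<forall>y. \<bar>u s y - u a y\<bar> \<le> 1"
    using cont_path_at[OF cu a, of 1] by auto
  obtain d2 where d2: "d2 > 0" "\<And>s. s \<ge> 0 \<Longrightarrow> \<bar>s - a\<bar> < d2 \<Longrightarrow> \<forall>y. \<bar>v s y - v a y\<bar> \<le> 1"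
    using cont_path_at[OF cv a, of 1] by auto
  have Bu0: "0 \<le> Bu" using Bu[of 0] by simp
  have Bv0: "0 \<le> Bv" using Bv[of 0] by simp
  define B where "B = Bu + Bv + 2"
  define c1 where "c1 = (\<integral>z. std_normal_density z * \<bar>z\<bar> \<partial>lborel)"
  have c1: "c1 \<ge> 0" unfolding c1_def by (rule integral_nonneg_AE) auto
  define \<delta> where "\<delta> = min (min d1 d2 / 2) (1 / (8 * (c1 + 1)\<^sup>2))"
  have \<delta>0: "\<delta> > 0" using d1 d2 c1 by (auto simp: \<delta>_def)
  have \<delta>d: "\<delta> < d1" "\<delta> < d2" using d1 d2 by (auto simp: \<delta>_def)
  have \<delta>c: "c1 * sqrt 2 * sqrt \<delta> \<le> 1/2"
    by (rule small_delta[OF c1]) (use \<delta>0 in \<open>auto simp: \<delta>_def\<close>)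
  have bnd_u: "\<bar>u s y\<bar> \<le> Bu + 1" if "a \<le> s" "s \<le> a + \<delta>" for s y
  proof -
    have "0 \<le> s" "\<bar>s - a\<bar> < d1" using that \<delta>d a by auto
    then have "\<bar>u s y - u a y\<bar> \<le> 1" using d1(2) by blast
    then show ?thesis using Bu[of y] by linarith
  qed
  have bnd_v: "\<bar>v s y\<bar> \<le> Bv + 1" if "a \<le> s" "s \<le> a + \<delta>" for s y
  proof -
    have "0 \<le> s" "\<bar>s - a\<bar> < d2" using that \<delta>d a by auto
    then have "\<bar>v s y - v a y\<bar> \<le> 1" using d2(2) by blast
    then show ?thesis using Bv[of y] by linarith
  qed
  have main: "\<forall>s y. a \<le> s \<longrightarrow> s \<le> a + \<delta> \<longrightarrow> \<bar>u s y - v s y\<bar> \<le> B / 2 ^ n" for n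
  proof (induction n)
    case 0
    show ?case
    proof (intro allI impI)
      fix s y assume "a \<le> s" "s \<le> a + \<delta>"
      then have "\<bar>u s y\<bar> \<le> Bu + 1" "\<bar>v s y\<bar> \<le> Bv + 1" using bnd_u bnd_v by auto
      then have "\<bar>u s y - v s y\<bar> \<le> B" unfolding B_def using abs_triangle_ineq4[of "u s y" "v s y"] by linarith
      then show "\<bar>u s y - v s y\<bar> \<le> B / 2 ^ 0" by simp
    qed
  next
    case (Suc n)
    define E where "E = B / 2 ^ n"
    have IH: "\<bar>u s y - v s y\<bar> \<le> E" if "a \<le> s" "s \<le> a + \<delta>" for s y
      using Suc.IH that unfolding E_def by blast
    show ?case
    proof (intro allI impI)
      fix t x assume t: "a \<le> t" "t \<le> a + \<delta>"
      have t0: "t \<ge> 0" using t a by linarith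
      define H where "H s = (if s = t then 0 else Fd u t x s - Fd v t x s)" for s
      have iu: "Fd u t x integrable_on {0..t}" unfolding Fd_def by (rule F_integrable[OF cu t0])
      have iv: "Fd v t x integrable_on {0..t}" unfolding Fd_def by (rule F_integrable[OF cv t0])
      have "u t x - v t x = integral {0..t} (Fd u t x) - integral {0..t} (Fd v t x)"
        using mild_eq[OF mu t0, of x] mild_eq[OF mv t0, of x] by simp
      also have "\<dots> = integral {0..t} (\<lambda>s. Fd u t x s - Fd v t x s)"
        by (rule integral_diff[OF iu iv, symmetric])
      also have "\<dots> = integral {0..t} H"
        by (rule integral_spike[where S="{t}"]) (auto simp: H_def)
      finally have uv: "u t x - v t x = integral {0..t} H" .
      have iH: "H integrable_on {0..t}"
        by (rule integrable_spike_finite[where S="{t}", OF _ _ integrable_diff[OF iu iv]]) (auto simp: H_def)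
      have "integral {0..a} H + integral {a..t} H = integral {0..t} H"
        by (rule Henstock_Kurzweil_Integration.integral_combine[OF a t(1) iH])
      moreover have "integral {0..a} H = 0"
      proof -
        have "integral {0..a} H = integral {0..a} (\<lambda>s. 0)"
        proof (rule integral_cong)
          fix s assume s: "s \<in> {0..a}"
          have "(\<lambda>y. \<bar>u s y\<bar>) = (\<lambda>y. \<bar>v s y\<bar>)" using eqa s by auto
          then show "H s = 0" by (simp add: H_def Fd_def)
        qed
        then show ?thesis by simp
      qed
      ultimately have uv2: "u t x - v t x = integral {a..t} H" using uv by simp
      define G where "G s = (1 / sqrt 2) * (c1 * E) * (1 / sqrt (t - s))" for s
      have Gint: "(G has_integral (1 / sqrt 2) * (c1 * E) * (2 * sqrt (t - a))) {a..t}"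
        unfolding G_def by (intro has_integral_mult_right kint t)
      have "norm (integral {a..t} H) \<le> integral {a..t} G"
      proof (rule Henstock_Kurzweil_Integration.integral_norm_bound_integral)
        show "H integrable_on {a..t}"
          by (rule integrable_subinterval_real[OF iH]) (use a in auto)
        show "G integrable_on {a..t}" using Gint by blast
        fix s assume s: "s \<in> {a..t}"
        show "norm (H s) \<le> G s"
        proof (cases "s = t")
          case True
          then show ?thesis by (simp add: H_def G_def)
        next
          case False
          then have st: "s < t" "0 \<le> s" using s a by auto
          have cs: "u s \<in> Cub" "v s \<in> Cub" using cubu cubv st by auto
          have "\<bar>Pint (\<lambda>y. \<bar>u s y\<bar>) (sqrt (2*(t-s))) x - Pint (\<lambda>y. \<bar>v s y\<bar>) (sqrt (2*(t-s))) x\<bar> \<le> c1 * E"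
            unfolding c1_def
          proof (rule Pint_diff_bound[where B="Bu + Bv + 2"])
            show "(\<lambda>y. \<bar>u s y\<bar>) \<in> borel_measurable borel" "(\<lambda>y. \<bar>v s y\<bar>) \<in> borel_measurable borel"
              using Cub_abs_meas cs by auto
            show "\<bar>\<bar>u s y\<bar>\<bar> \<le> Bu + Bv + 2" for y using bnd_u[of s y] s t Bu0 Bv0 by (auto simp: abs_le_iff)
            show "\<bar>\<bar>v s y\<bar>\<bar> \<le> Bu + Bv + 2" for y using bnd_v[of s y] s t Bu0 Bv0 by (auto simp: abs_le_iff)
            show "\<bar>\<bar>u s y\<bar> - \<bar>v s y\<bar>\<bar> \<le> E" for y
            proof -
              have "a \<le> s" "s \<le> a + \<delta>" using s t by auto
              then have "\<bar>u s y - v s y\<bar> \<le> E" by (rule IH)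
              then show ?thesis using abs_triangle_ineq3[of "u s y" "v s y"] by linarith
            qed
          qed
          then have "\<bar>(1 / sqrt 2) * ((Pint (\<lambda>y. \<bar>u s y\<bar>) (sqrt (2*(t-s))) x - Pint (\<lambda>y. \<bar>v s y\<bar>) (sqrt (2*(t-s))) x) * (1 / sqrt (t - s)))\<bar>
              \<le> (1 / sqrt 2) * (c1 * E) * (1 / sqrt (t - s))"
            using st by (simp add: abs_mult divide_right_mono)
          moreover have "H s = (1 / sqrt 2) * ((Pint (\<lambda>y. \<bar>u s y\<bar>) (sqrt (2*(t-s))) x - Pint (\<lambda>y. \<bar>v s y\<bar>) (sqrt (2*(t-s))) x) * (1 / sqrt (t - s)))"
            using False F_formula[OF cu st(2,1), of x] F_formula[OF cv st(2,1), of x]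
            by (simp add: H_def Fd_def algebra_simps)
          ultimately show ?thesis by (simp add: G_def)
        qed
      qed
      then have "\<bar>integral {a..t} H\<bar> \<le> integral {a..t} G" by simp
      also have "integral {a..t} G = (1 / sqrt 2) * (c1 * E) * (2 * sqrt (t - a))"
        using Gint by blast
      also have "\<dots> = (2 / sqrt 2) * c1 * sqrt (t - a) * E"
        by (simp add: ac_simps)
      also have "\<dots> = (c1 * sqrt 2 * sqrt (t - a)) * E"
        unfolding real_div_sqrt[of 2, simplified] by (simp add: ac_simps)
      also have "\<dots> \<le> (c1 * sqrt 2 * sqrt \<delta>) * E"
      proof -
        have E0: "E \<ge> 0" using IH[of a 0] a \<delta>0 by force
        have "sqrt (t - a) \<le> sqrt \<delta>" using t by simp
        then show ?thesis using c1 E0 by (intro mult_right_mono mult_left_mono) auto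
      qed
      also have "\<dots> \<le> (1/2) * E"
        using \<delta>c IH[of a 0] a \<delta>0 by (intro mult_right_mono) force+
      finally show "\<bar>u t x - v t x\<bar> \<le> B / 2 ^ Suc n" using uv2 by (simp add: E_def)
    qed
  qed
  show ?thesis
  proof (intro exI[of _ \<delta>] conjI \<delta>0 allI impI)
    fix s y assume s: "0 \<le> s" "s \<le> a + \<delta>"
    show "u s y = v s y"
    proof (cases "s \<le> a")
      case True then show ?thesis using eqa s by auto
    next
      case False
      then have "\<bar>u s y - v s y\<bar> = 0"
        using main s by (intro zero_by_halving[where B=B]) auto
      then show ?thesis by simp
    qed
  qed
qed

lemma uniq:
  assumes mu: "mild_solution u0 u" and mv: "mild_solution u0 v"
  shows "\<forall>t\<ge>0. \<forall>x. u t x = v t x"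
proof (rule ccontr)
  assume "\<not> (\<forall>t\<ge>0. \<forall>x. u t x = v t x)"
  then obtain t0 x0 where t0: "t0 \<ge> 0" "u t0 x0 \<noteq> v t0 x0" by auto
  have cu: "cont_Cub_path u" using mu unfolding mild_solution_def by auto
  have cv: "cont_Cub_path v" using mv unfolding mild_solution_def by auto
  define Z where "Z = {a. 0 \<le> a \<and> (\<forall>s y. 0 \<le> s \<longrightarrow> s \<le> a \<longrightarrow> u s y = v s y)}"
  have zero: "u 0 y = v 0 y" for y
    using mild_eq[OF mu, of 0 y] mild_eq[OF mv, of 0 y] by simp
  have Z0: "0 \<in> Z" unfolding Z_def using zero by auto
  have Zb: "a < t0" if "a \<in> Z" for a
  proof (rule ccontr)
    assume "\<not> a < t0"
    then have "t0 \<le> a" by simp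
    then have "u t0 x0 = v t0 x0" using that t0(1) unfolding Z_def by blast
    then show False using t0(2) by simp
  qed
  have bdd: "bdd_above Z" using Zb by (meson bdd_aboveI less_imp_le)
  define b where "b = Sup Z"
  have b0: "0 \<le> b" unfolding b_def using Z0 bdd by (rule cSup_upper)
  have below: "u s y = v s y" if "0 \<le> s" "s < b" for s y
  proof -
    have "\<exists>a\<in>Z. s < a" using less_cSup_iff[of Z s] Z0 bdd \<open>s < b\<close> unfolding b_def by auto
    then obtain a where "a \<in> Z" "s < a" by blast
    then show ?thesis using that unfolding Z_def by auto
  qed
  have bZ: "b \<in> Z"
  proof -
    have "u s y = v s y" if "0 \<le> s" "s \<le> b" for s y
    proof (cases "s < b")
      case True then show ?thesis using below that by auto
    next
      case False
      then have sb: "s = b" using that by auto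
      show ?thesis
      proof (cases "b = 0")
        case True then show ?thesis using zero sb by simp
      next
        case False
        then have "b > 0" using b0 by simp
        then show ?thesis using closure_step[OF cu cv _ below] sb by auto
      qed
    qed
    then show ?thesis unfolding Z_def using b0 by auto
  qed
  obtain \<delta> where \<delta>: "\<delta> > 0" "\<forall>s y. 0 \<le> s \<longrightarrow> s \<le> b + \<delta> \<longrightarrow> u s y = v s y"
    using uniq_step[OF mu mv b0] bZ unfolding Z_def by auto
  have "b + \<delta> \<in> Z" unfolding Z_def using \<delta> b0 by auto
  then have "b + \<delta> \<le> b" unfolding b_def using bdd by (rule cSup_upper)
  then show False using \<delta> by simp
qed

lemma v_Cub:
  assumes "g \<in> Cub"
  shows "(\<lambda>x. - g (- x)) \<in> Cub"
proof -
  obtain B where B: "\<And>y. \<bar>g y\<bar> \<le> B" using Cub_bdd[OF assms] by auto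
  have "bounded (range (\<lambda>x. - g (- x)))"
    unfolding bounded_iff using B by auto
  moreover have "uniformly_continuous_on UNIV (\<lambda>x. - g (- x))"
    unfolding uniformly_continuous_on_def
  proof (intro allI impI)
    fix e :: real assume e: "e > 0"
    have uc: "uniformly_continuous_on UNIV g" using assms unfolding Cub_def by auto
    obtain d where d: "d > 0" "\<And>x x'. dist x' x < d \<Longrightarrow> dist (g x') (g x) < e"
      using uc e unfolding uniformly_continuous_on_def by blast
    show "\<exists>d>0. \<forall>x\<in>UNIV. \<forall>x'\<in>UNIV. dist x' x < d \<longrightarrow> dist (- g (- x')) (- g (- x)) < e"
    proof (intro exI[of _ d] conjI ballI impI d(1))
      fix x x' :: real assume "dist x' x < d"
      then have "dist (- x') (- x) < d" by (simp add: dist_real_def abs_minus_commute)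
      then have "dist (g (- x')) (g (- x)) < e" by (rule d(2))
      then show "dist (- g (- x')) (- g (- x)) < e" by (simp add: dist_real_def abs_minus_commute)
    qed
  qed
  ultimately show ?thesis unfolding Cub_def by auto
qed

lemma v_cont:
  assumes "cont_Cub_path u"
  shows "cont_Cub_path (\<lambda>t x. - u t (- x))"
  unfolding cont_Cub_path_def
proof (intro conjI allI impI)
  fix t :: real assume "t \<ge> 0"
  then show "(\<lambda>x. - u t (- x)) \<in> Cub" using assms v_Cub unfolding cont_Cub_path_def by auto
next
  fix t e :: real assume t: "t \<ge> 0" and e: "e > 0"
  obtain d where d: "d > 0" "\<And>s. s \<ge> 0 \<Longrightarrow> \<bar>s - t\<bar> < d \<Longrightarrow> \<forall>x. \<bar>u s x - u t x\<bar> \<le> e"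
    using cont_path_at[OF assms t e] by auto
  show "\<exists>d>0. \<forall>s\<ge>0. \<bar>s - t\<bar> < d \<longrightarrow> (\<forall>x. \<bar>- u s (- x) - - u t (- x)\<bar> \<le> e)"
  proof (intro exI[of _ d] conjI allI impI d(1))
    fix s x assume "s \<ge> 0" "\<bar>s - t\<bar> < d"
    then have "\<bar>u s (- x) - u t (- x)\<bar> \<le> e" using d(2) by blast
    then show "\<bar>- u s (- x) - - u t (- x)\<bar> \<le> e" by linarith
  qed
qed

lemma heat_odd:
  assumes "u0 \<in> Cub" "\<And>x. u0 (- x) = - u0 x"
  shows "heat t u0 (- x) = - heat t u0 x"
proof (cases "t \<le> 0")
  case True then show ?thesis using assms(2) by (simp add: heat_def)
next
  case False
  then have t: "t > 0" by simp
  obtain B where B: "\<And>y. \<bar>u0 y\<bar> \<le> B" using Cub_bdd[OF assms(1)] by auto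
  have m: "u0 \<in> borel_measurable borel" by (rule Cub_meas[OF assms(1)])
  have "Hl (sqrt (2*t)) u0 (- x) = (\<integral>y. normal_density (- x) (sqrt (2*t)) y * u0 y \<partial>lborel)"
    by (simp add: Hl_def)
  also have "\<dots> = \<bar>-1\<bar> *\<^sub>R (\<integral>y. normal_density (- x) (sqrt (2*t)) (0 + -1 * y) * u0 (0 + -1 * y) \<partial>lborel)"
    by (rule lborel_integral_real_affine) simp
  also have "\<dots> = (\<integral>y. normal_density (- x) (sqrt (2*t)) (0 + -1 * y) * u0 (0 + -1 * y) \<partial>lborel)"
    by simp
  also have "\<dots> = (\<integral>y. - (normal_density x (sqrt (2*t)) y * u0 y) \<partial>lborel)"
  proof (rule Bochner_Integration.integral_cong)
    fix y
    have "(- y - - x)\<^sup>2 = (y - x)\<^sup>2" by (simp add: power2_eq_square algebra_simps)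
    then have "normal_density (- x) (sqrt (2*t)) (- y) = normal_density x (sqrt (2*t)) y"
      unfolding normal_density_def by simp
    then show "normal_density (- x) (sqrt (2*t)) (0 + -1 * y) * u0 (0 + -1 * y) = - (normal_density x (sqrt (2*t)) y * u0 y)"
      using assms(2)[of y] by simp
  qed simp
  also have "\<dots> = - Hl (sqrt (2*t)) u0 x"
    by (simp add: Hl_def)
  finally show ?thesis
    using heat_Hl[OF t m B, of x] heat_Hl[OF t m B, of "- x"] by simp
qed

lemma Pint_reflect: "Pint (\<lambda>y. g (- y)) \<sigma> x = - Pint g \<sigma> (- x)"
proof -
  have "Pint (\<lambda>y. g (- y)) \<sigma> x = \<bar>-1\<bar> *\<^sub>R (\<integral>z. std_normal_density (0 + -1 * z) * (0 + -1 * z) * g (- (x + \<sigma> * (0 + -1 * z))) \<partial>lborel)"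
    unfolding Pint_def by (rule lborel_integral_real_affine) simp
  also have "\<dots> = (\<integral>z. std_normal_density (0 + -1 * z) * (0 + -1 * z) * g (- (x + \<sigma> * (0 + -1 * z))) \<partial>lborel)"
    by simp
  also have "\<dots> = (\<integral>z. - (std_normal_density z * z * g (- x + \<sigma> * z)) \<partial>lborel)"
  proof (rule Bochner_Integration.integral_cong)
    fix z
    have "std_normal_density (- z) = std_normal_density z" unfolding normal_density_def by simp
    moreover have "- (x + \<sigma> * (0 + -1 * z)) = - x + \<sigma> * z" by simp
    ultimately show "std_normal_density (0 + -1 * z) * (0 + -1 * z) * g (- (x + \<sigma> * (0 + -1 * z)))
        = - (std_normal_density z * z * g (- x + \<sigma> * z))" by simp
  qed simp
  also have "\<dots> = - Pint g \<sigma> (- x)"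
    by (simp add: Pint_def)
  finally show ?thesis .
qed

lemma v_mild:
  assumes u0: "u0 \<in> C1ub" and odd: "\<And>x. u0 (- x) = - u0 x" and mu: "mild_solution u0 u"
  shows "mild_solution u0 (\<lambda>t x. - u t (- x))"
proof -
  have cu: "cont_Cub_path u" using mu unfolding mild_solution_def by auto
  have cv: "cont_Cub_path (\<lambda>t x. - u t (- x))" by (rule v_cont[OF cu])
  have u0c: "u0 \<in> Cub" using u0 unfolding C1ub_def by auto
  have "- u t (- x) = heat t u0 x + integral {0..t} (\<lambda>s. deriv (\<lambda>z. heat (t - s) (\<lambda>y. \<bar>- u s (- y)\<bar>) z) x)"
    if t: "t \<ge> 0" for t x
  proof -
    have Fv: "deriv (\<lambda>z. heat (t - s) (\<lambda>y. \<bar>- u s (- y)\<bar>) z) x = - Fd u t (- x) s"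
      if s: "s \<in> {0..t} - {t}" for s
    proof -
      have st: "0 \<le> s" "s < t" using s by auto
      have "deriv (\<lambda>z. heat (t - s) (\<lambda>y. \<bar>- u s (- y)\<bar>) z) x
          = (1 / sqrt 2) * (Pint (\<lambda>y. \<bar>- u s (- y)\<bar>) (sqrt (2*(t-s))) x * (1 / sqrt (t - s)))"
        using F_formula[OF cv st, of x] by simp
      also have "Pint (\<lambda>y. \<bar>- u s (- y)\<bar>) (sqrt (2*(t-s))) x = - Pint (\<lambda>y. \<bar>u s y\<bar>) (sqrt (2*(t-s))) (- x)"
        using Pint_reflect[of "\<lambda>y. \<bar>u s y\<bar>"] by simp
      also have "(1 / sqrt 2) * (- Pint (\<lambda>y. \<bar>u s y\<bar>) (sqrt (2*(t-s))) (- x) * (1 / sqrt (t - s)))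
          = - ((1 / sqrt 2) * (Pint (\<lambda>y. \<bar>u s y\<bar>) (sqrt (2*(t-s))) (- x) * (1 / sqrt (t - s))))"
        by simp
      also have "\<dots> = - Fd u t (- x) s"
        using F_formula[OF cu st, of "- x"] by (simp add: Fd_def)
      finally show ?thesis .
    qed
    have "- u t (- x) = - (heat t u0 (- x) + integral {0..t} (Fd u t (- x)))"
      using mild_eq[OF mu t, of "- x"] by simp
    also have "\<dots> = heat t u0 x + integral {0..t} (\<lambda>s. - Fd u t (- x) s)"
      using heat_odd[OF u0c odd, of t x] by simp
    also have "integral {0..t} (\<lambda>s. - Fd u t (- x) s)
        = integral {0..t} (\<lambda>s. deriv (\<lambda>z. heat (t - s) (\<lambda>y. \<bar>- u s (- y)\<bar>) z) x)"
      by (rule integral_spike[where S="{t}"]) (use Fv in auto)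
    finally show ?thesis .
  qed
  then show ?thesis unfolding mild_solution_def using cv by auto
qed

theorem lemma3p8:
  fixes u0 :: "real \<Rightarrow> real" and u :: "real \<Rightarrow> real \<Rightarrow> real"
  assumes "u0 \<in> C1ub"
    and "\<And>x. u0 (- x) = - u0 x"
    and "mild_solution u0 u"
  shows "\<forall>t\<ge>0. \<forall>x. u t (- x) = - u t x"
proof (intro allI impI)
  fix t x :: real assume t: "t \<ge> 0"
  have "u t (- x) = (\<lambda>t x. - u t (- x)) t (- x)"
    using uniq[OF assms(3) v_mild[OF assms]] t by blast
  then show "u t (- x) = - u t x" by simp
qed

end
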